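(* Let $n\geq 3$ and consider the $n$-cycle scenario. For every nondisturbing strongly contextual behavior $\{p_1,\dots,p_n\}$ there exist $k\in\{1,\dots,n\}$ and $(a_1,\dots,a_n)\in\{0,1\}^n$ (with $a_{n+1}:=a_1$) such that $\bar p_k(a_k,\lnot a_{k+1})=\bar p_k(\lnot a_k,a_{k+1})=1$ and $\bar p_k(a_k,a_{k+1})=\bar p_k(\lnot a_k,\lnot a_{k+1})=0$, and for every $i\neq k$, $\bar p_i(a_i,a_{i+1})=\bar p_i(\lnot a_i,\lnot a_{i+1})=1$ and $\bar p_i(a_i,\lnot a_{i+1})=\bar p_i(\lnot a_i,a_{i+1})=0$, where $\lnot x=1-x$.
   Context: The $n$-cycle scenario has measurements $M_1,\dots,M_n$ with outcomes in $\{0,1\}$ and contexts $\{M_i,M_{i+1}\}$, indices mod $n$. A behavior is a family of probability distributions $p_i$ on $\{0,1\}^2$, $p_i(x,y)$ the probability that $M_i=x$, $M_{i+1}=y$; it is nondisturbing if $\sum_y p_i(y,x)=\sum_y p_{i+1}(x,y)$ for all $i,x$. Set $\bar p_i(x,y)=1$ if $p_i(x,y)>0$ and $0$ otherwise. The behavior is strongly contextual if there is no $t\in\{0,1\}^n$ with $p_i(t_i,t_{i+1})>0$ for all $i$. *)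

theory Defs
  imports Complex_Main
begin

text \<open>n-cycle scenario: measurements M_0,...,M_{n-1} (0-based), outcomes in bool
  (False = 0, True = 1), contexts {M_i, M_{(i+1) mod n}}.
  A behavior is p :: nat => bool => bool => real, where p i x y is the probability
  that M_i = x and M_{(i+1) mod n} = y, for i < n.\<close>

definition is_behavior :: "nat \<Rightarrow> (nat \<Rightarrow> bool \<Rightarrow> bool \<Rightarrow> real) \<Rightarrow> bool" where
  "is_behavior n p \<longleftrightarrow>
     (\<forall>i<n. (\<forall>x y. p i x y \<ge> 0) \<and> (\<Sum>x\<in>UNIV. \<Sum>y\<in>UNIV. p i x y) = 1)"

definition nondisturbing :: "nat \<Rightarrow> (nat \<Rightarrow> bool \<Rightarrow> bool \<Rightarrow> real) \<Rightarrow> bool" where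
  "nondisturbing n p \<longleftrightarrow>
     (\<forall>i<n. \<forall>x. (\<Sum>y\<in>UNIV. p i y x) = (\<Sum>y\<in>UNIV. p ((i + 1) mod n) x y))"

definition pbar :: "(nat \<Rightarrow> bool \<Rightarrow> bool \<Rightarrow> real) \<Rightarrow> nat \<Rightarrow> bool \<Rightarrow> bool \<Rightarrow> nat" where
  "pbar p i x y = (if p i x y > 0 then 1 else 0)"

definition strongly_contextual :: "nat \<Rightarrow> (nat \<Rightarrow> bool \<Rightarrow> bool \<Rightarrow> real) \<Rightarrow> bool" where
  "strongly_contextual n p \<longleftrightarrow>
     \<not> (\<exists>t :: nat \<Rightarrow> bool. \<forall>i<n. p i (t i) (t ((i + 1) mod n)) > 0)"

end

theory Submission
  imports Defs
begin

lemma col_row: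
  assumes beh: "is_behavior n p" and nd: "nondisturbing n p" and i: "i < n"
    and pos: "p i x y > 0"
  shows "\<exists>y'. p ((i + 1) mod n) y y' > 0"
proof -
  have nn: "\<forall>x y. p i x y \<ge> 0" using beh i unfolding is_behavior_def by blast
  have "(\<Sum>x\<in>UNIV. p i x y) > 0"
    using pos nn by (cases x) (auto simp: UNIV_bool intro: add_pos_nonneg add_nonneg_pos)
  then have S: "(\<Sum>y'\<in>UNIV. p ((i + 1) mod n) y y') > 0"
    using nd i unfolding nondisturbing_def by metis
  show ?thesis
  proof (rule ccontr)
    assume "\<not> (\<exists>y'. p ((i + 1) mod n) y y' > 0)"
    then have "p ((i + 1) mod n) y True \<le> 0" "p ((i + 1) mod n) y False \<le> 0"
      by (auto simp: not_less)
    moreover note S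
    ultimately show False by (simp add: UNIV_bool)
  qed
qed

lemma col_zero:
  assumes beh: "is_behavior n p" and nd: "nondisturbing n p" and i: "i < n"
    and z: "\<forall>x. \<not> p i x y > 0"
  shows "\<forall>y'. \<not> p ((i + 1) mod n) y y' > 0"
proof -
  have nn: "\<forall>x y. p i x y \<ge> 0" using beh i unfolding is_behavior_def by blast
  have i1: "(i + 1) mod n < n" using i by simp
  have nn1: "\<forall>x y. p ((i + 1) mod n) x y \<ge> 0" using beh i1 unfolding is_behavior_def by blast
  have "(\<Sum>x\<in>UNIV. p i x y) = 0"
  proof -
    have "p i True y \<le> 0" "p i False y \<le> 0" using z by (auto simp: not_less)
    moreover have "p i True y \<ge> 0" "p i False y \<ge> 0" using nn by auto
    ultimately show ?thesis by (simp add: UNIV_bool)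
  qed
  then have S: "(\<Sum>y'\<in>UNIV. p ((i + 1) mod n) y y') = 0"
    using nd i unfolding nondisturbing_def by metis
  show ?thesis
  proof -
    have "p ((i + 1) mod n) y True \<ge> 0" "p ((i + 1) mod n) y False \<ge> 0" using nn1 by auto
    moreover note S
    ultimately have "p ((i + 1) mod n) y True = 0" "p ((i + 1) mod n) y False = 0"
      by (simp_all add: UNIV_bool)
    then show ?thesis
    proof (intro allI)
      fix y' assume "p ((i + 1) mod n) y True = 0" "p ((i + 1) mod n) y False = 0"
      then show "\<not> p ((i + 1) mod n) y y' > 0" by (cases y') simp_all
    qed
  qed
qed

lemma global:
  assumes n: "n \<ge> 3" and beh: "is_behavior n p" and nd: "nondisturbing n p"
    and j: "j < n" and start: "p j x y0 > 0"
    and close: "\<forall>z. (\<exists>y. p ((j + n - 1) mod n) z y > 0) \<longrightarrow> p ((j + n - 1) mod n) z x > 0"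
  shows "\<exists>t :: nat \<Rightarrow> bool. \<forall>i<n. p i (t i) (t ((i + 1) mod n)) > 0"
proof -
  define t where "t = rec_nat x (\<lambda>m tm. SOME y. p ((j + m) mod n) tm y > 0)"
  have t0: "t 0 = x" unfolding t_def by simp
  have tS: "t (Suc m) = (SOME y. p ((j + m) mod n) (t m) y > 0)" for m
    unfolding t_def by simp
  have inv: "\<exists>y. p ((j + m) mod n) (t m) y > 0" for m
  proof (induction m)
    case 0
    then show ?case using start j t0 by auto
  next
    case (Suc m)
    then have "p ((j + m) mod n) (t m) (t (Suc m)) > 0"
      unfolding tS by (rule someI_ex)
    from col_row[OF beh nd _ this] n
    obtain y' where "p (((j + m) mod n + 1) mod n) (t (Suc m)) y' > 0" by auto
    moreover have "((j + m) mod n + 1) mod n = (j + Suc m) mod n"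
      by (simp add: mod_Suc_eq)
    ultimately show ?case by auto
  qed
  have step: "p ((j + m) mod n) (t m) (t (Suc m)) > 0" for m
    unfolding tS using inv[of m] by (rule someI_ex)
  define T where "T i = t ((i + n - j) mod n)" for i
  have "\<forall>i<n. p i (T i) (T ((i + 1) mod n)) > 0"
  proof (intro allI impI)
    fix i assume i: "i < n"
    define m where "m = (i + n - j) mod n"
    have mn: "m < n" using j unfolding m_def by simp
    have jm: "(j + m) mod n = i"
    proof -
      have "(j + m) mod n = (j + (i + n - j)) mod n" unfolding m_def by (simp add: mod_add_right_eq)
      also have "j + (i + n - j) = i + n" using j by simp
      finally show ?thesis using i by simp
    qed
    have e: "((i + 1) mod n + n - j) mod n = Suc m mod n"
    proof -
      have "((i + 1) mod n + n - j) mod n = ((i + 1) mod n + (n - j)) mod n" using j by simp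
      also have "\<dots> = (i + 1 + (n - j)) mod n" by (simp add: mod_add_left_eq)
      also have "i + 1 + (n - j) = Suc (i + n - j)" using j by simp
      also have "Suc (i + n - j) mod n = Suc m mod n" unfolding m_def by (simp add: mod_Suc_eq)
      finally show ?thesis .
    qed
    show "p i (T i) (T ((i + 1) mod n)) > 0"
    proof (cases "Suc m < n")
      case True
      then have "T ((i + 1) mod n) = t (Suc m)" unfolding T_def e by simp
      moreover have "T i = t m" unfolding T_def m_def ..
      ultimately show ?thesis using step[of m] jm by simp
    next
      case False
      then have sm: "Suc m = n" using mn by simp
      then have "T ((i + 1) mod n) = x" unfolding T_def e using t0 by simp
      moreover have "T i = t m" unfolding T_def m_def ..
      moreover have "(j + n - 1) mod n = i" 
      proof -
        have "j + n - 1 = j + m" using sm by simp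
        then show ?thesis using jm by simp
      qed
      ultimately show ?thesis using close inv[of m] jm by auto
    qed
  qed
  then show ?thesis by blast
qed


theorem theorem5:
  fixes n :: nat and p :: "nat \<Rightarrow> bool \<Rightarrow> bool \<Rightarrow> real"
  assumes "n \<ge> 3"
    and "is_behavior n p"
    and "nondisturbing n p"
    and "strongly_contextual n p"
  shows "\<exists>k<n. \<exists>a :: nat \<Rightarrow> bool.
     pbar p k (a k) (\<not> a ((k + 1) mod n)) = 1 \<and>
     pbar p k (\<not> a k) (a ((k + 1) mod n)) = 1 \<and>
     pbar p k (a k) (a ((k + 1) mod n)) = 0 \<and>
     pbar p k (\<not> a k) (\<not> a ((k + 1) mod n)) = 0 \<and>
     (\<forall>i<n. i \<noteq> k \<longrightarrow>
        pbar p i (a i) (a ((i + 1) mod n)) = 1 \<and>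
        pbar p i (\<not> a i) (\<not> a ((i + 1) mod n)) = 1 \<and>
        pbar p i (a i) (\<not> a ((i + 1) mod n)) = 0 \<and>
        pbar p i (\<not> a i) (a ((i + 1) mod n)) = 0)"
proof -
  note n = assms(1) and beh = assms(2) and nd = assms(3)
  have nog: "\<not> (\<exists>t :: nat \<Rightarrow> bool. \<forall>i<n. p i (t i) (t ((i + 1) mod n)) > 0)"
    using assms(4) unfolding strongly_contextual_def .
  have idx: "((i + n - 1) mod n + 1) mod n = i" if "i < n" for i
  proof -
    have "(i + n - 1) mod n + 1 = (i + n - 1) mod n + 1" ..
    have "((i + n - 1) mod n + 1) mod n = (i + n - 1 + 1) mod n" by (rule mod_add_left_eq)
    also have "i + n - 1 + 1 = i + n" using n by simp
    finally show ?thesis using that by simp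
  qed
  have idx2: "((i + 1) mod n + n - 1) mod n = i" if "i < n" for i
  proof (cases "i + 1 < n")
    case True
    then show ?thesis using that by simp
  next
    case False
    then have "i + 1 = n" using that by simp
    then show ?thesis using n by simp
  qed
  have L: "\<exists>y. p i x y > 0" if i: "i < n" for i x
  proof (rule ccontr)
    assume A: "\<not> (\<exists>y. p i x y > 0)"
    have nn: "\<forall>x y. p i x y \<ge> 0" using beh i unfolding is_behavior_def by blast
    have s1: "(\<Sum>x\<in>UNIV. \<Sum>y\<in>UNIV. p i x y) = 1" using beh i unfolding is_behavior_def by blast
    have "\<exists>y. p i (\<not> x) y > 0"
    proof (rule ccontr)
      assume B: "\<not> (\<exists>y. p i (\<not> x) y > 0)"
      have "p i z y = 0" for y z
      proof (cases "z = x")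
        case True then have "\<not> p i z y > 0" "p i z y \<ge> 0" using A nn by auto
        then show ?thesis by linarith
      next
        case False then have "z = (\<not> x)" by auto
        then have "\<not> p i z y > 0" "p i z y \<ge> 0" using B nn by auto
        then show ?thesis by linarith
      qed
      then show False using s1 by (simp add: UNIV_bool)
    qed
    then obtain y0 where y0: "p i (\<not> x) y0 > 0" by blast
    have "\<exists>t :: nat \<Rightarrow> bool. \<forall>i<n. p i (t i) (t ((i + 1) mod n)) > 0"
    proof (rule global[OF n beh nd i y0], intro allI impI)
      fix z assume "\<exists>y. p ((i + n - 1) mod n) z y > 0"
      then obtain y where y: "p ((i + n - 1) mod n) z y > 0" by blast
      have "(i + n - 1) mod n < n" using n by simp
      from col_row[OF beh nd this y] idx[OF i] have "\<exists>y'. p i y y' > 0" by simp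
      with A have "y \<noteq> x" by blast
      then have "y = (\<not> x)" by blast
      with y show "p ((i + n - 1) mod n) z (\<not> x) > 0" by simp
    qed
    with nog show False by blast
  qed
  have U2: "x = x'" if i: "i < n" and a: "p i x y > 0" and b: "p i x' y > 0" for i x x' y
  proof (rule ccontr)
    assume ne: "x \<noteq> x'"
    have zz: "\<And>z. z = x \<or> z = x'" using ne by auto
    have full: "\<forall>z. p i z y > 0"
    proof
      fix z show "p i z y > 0" using zz[of z] a b by (elim disjE) simp_all
    qed
    define j where "j = (i + 1) mod n"
    have j: "j < n" unfolding j_def using n by simp
    obtain y0 where y0: "p j y y0 > 0" using col_row[OF beh nd i a] unfolding j_def by blast
    have "\<exists>t :: nat \<Rightarrow> bool. \<forall>i<n. p i (t i) (t ((i + 1) mod n)) > 0"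
      by (rule global[OF n beh nd j y0]) (unfold j_def idx2[OF i], use full in blast)
    with nog show False by blast
  qed
  have R: "\<exists>x. p i x y > 0" if i: "i < n" for i y
  proof (rule ccontr)
    assume "\<not> (\<exists>x. p i x y > 0)"
    then have "\<forall>y'. \<not> p ((i + 1) mod n) y y' > 0" using col_zero[OF beh nd i] by blast
    moreover have "(i + 1) mod n < n" using n by simp
    ultimately show False using L by blast
  qed
  have U1: "y = y'" if i: "i < n" and a: "p i x y > 0" and b: "p i x y' > 0" for i x y y'
  proof (rule ccontr)
    assume ne: "y \<noteq> y'"
    obtain w where w: "p i (\<not> x) w > 0" using L[OF i] by blast
    have "p i x w > 0" using a b ne by (cases w; cases y; cases y') auto
    from U2[OF i this w] show False by simp
  qed
  define a where "a = rec_nat False (\<lambda>m am. SOME y. p m am y > 0)"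
  have aS: "a (Suc m) = (SOME y. p m (a m) y > 0)" for m unfolding a_def by simp
  have astep: "p m (a m) (a (Suc m)) > 0" if "m < n" for m
    unfolding aS using L[OF that] by (rule someI_ex)
  have pb1: "pbar p i x y = 1" if "p i x y > 0" for i x y using that by (simp add: pbar_def)
  have pb0: "pbar p i x y = 0" if "\<not> p i x y > 0" for i x y using that by (simp add: pbar_def)
  define k where "k = n - 1"
  have k: "k < n" "(k + 1) mod n = 0" using n unfolding k_def by auto
  have others: "\<forall>i<n. i \<noteq> k \<longrightarrow>
        pbar p i (a i) (a ((i + 1) mod n)) = 1 \<and>
        pbar p i (\<not> a i) (\<not> a ((i + 1) mod n)) = 1 \<and>
        pbar p i (a i) (\<not> a ((i + 1) mod n)) = 0 \<and>
        pbar p i (\<not> a i) (a ((i + 1) mod n)) = 0"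
  proof (intro allI impI)
    fix i assume i: "i < n" and ik: "i \<noteq> k"
    then have e: "(i + 1) mod n = Suc i" unfolding k_def by simp
    have p1: "p i (a i) (a (Suc i)) > 0" using astep i by simp
    have p3: "\<not> p i (a i) (\<not> a (Suc i)) > 0" using U1[OF i p1] by auto
    have p4: "\<not> p i (\<not> a i) (a (Suc i)) > 0" using U2[OF i p1] by auto
    obtain y where y: "p i (\<not> a i) y > 0" using L[OF i] by blast
    have p2: "p i (\<not> a i) (\<not> a (Suc i)) > 0" using y p4 by (cases y; cases "a (Suc i)") auto
    show "pbar p i (a i) (a ((i + 1) mod n)) = 1 \<and>
        pbar p i (\<not> a i) (\<not> a ((i + 1) mod n)) = 1 \<and>
        pbar p i (a i) (\<not> a ((i + 1) mod n)) = 0 \<and>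
        pbar p i (\<not> a i) (a ((i + 1) mod n)) = 0"
      unfolding e pbar_def using p1 p2 p3 p4 by simp
  qed
  have q0: "\<not> p k (a k) (a 0) > 0"
  proof
    assume q: "p k (a k) (a 0) > 0"
    have "\<forall>i<n. p i (a i) (a ((i + 1) mod n)) > 0"
    proof (intro allI impI)
      fix i assume i: "i < n"
      show "p i (a i) (a ((i + 1) mod n)) > 0"
      proof (cases "i = k")
        case True then show ?thesis using q k by simp
      next
        case False
        then have "(i + 1) mod n = Suc i" using i unfolding k_def by simp
        then show ?thesis using astep i by simp
      qed
    qed
    with nog show False by blast
  qed
  obtain y where y: "p k (a k) y > 0" using L[OF k(1)] by blast
  have q1: "p k (a k) (\<not> a 0) > 0" using y q0 by (cases y; cases "a 0") auto
  obtain x where x: "p k x (a 0) > 0" using R[OF k(1)] by blast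
  have q2: "p k (\<not> a k) (a 0) > 0" using x q0 by (cases x; cases "a k") auto
  have q3: "\<not> p k (\<not> a k) (\<not> a 0) > 0" using U2[OF k(1) q1] by auto
  show ?thesis
    apply (rule exI[of _ k], intro conjI k(1))
    apply (rule exI[of _ a])
    unfolding k(2) using q0 q1 q2 q3 others by (simp add: pbar_def)
qed

end
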